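(* Let $G$ be a connected graph and let $v$ be a cut-vertex of $G$, where $G_1, \ldots, G_c$ are the connected components of $G - \{v\}$. Then for any minimal fort $F$ of $G$ with $v \notin F$, at most two indices $i$ satisfy $V(G_i) \cap F \neq \emptyset$.
   Context: Graphs are finite and simple. A fort of a graph $G$ is a nonempty set $F\subseteq V(G)$ such that every vertex outside $F$ is adjacent to either zero or at least two vertices of $F$; it is minimal if no proper subset is a fort. *)

theory Defs
  imports Main
begin

definition simple_graph :: "'a set \<Rightarrow> ('a \<Rightarrow> 'a \<Rightarrow> bool) \<Rightarrow> bool" where
  "simple_graph V E \<longleftrightarrow> finite V \<and> (\<forall>x y. E x y \<longrightarrow> x \<in> V \<and> y \<in> V)
     \<and> (\<forall>x y. E x y \<longrightarrow> E y x) \<and> (\<forall>x. \<not> E x x)"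

definition reach_in :: "('a \<Rightarrow> 'a \<Rightarrow> bool) \<Rightarrow> 'a set \<Rightarrow> 'a \<Rightarrow> 'a \<Rightarrow> bool" where
  "reach_in E S x y \<longleftrightarrow> x \<in> S \<and> y \<in> S \<and> (\<lambda>a b. E a b \<and> a \<in> S \<and> b \<in> S)\<^sup>*\<^sup>* x y"

definition connected_graph :: "'a set \<Rightarrow> ('a \<Rightarrow> 'a \<Rightarrow> bool) \<Rightarrow> bool" where
  "connected_graph V E \<longleftrightarrow> V \<noteq> {} \<and> (\<forall>x\<in>V. \<forall>y\<in>V. reach_in E V x y)"

definition components_in :: "('a \<Rightarrow> 'a \<Rightarrow> bool) \<Rightarrow> 'a set \<Rightarrow> 'a set set" where
  "components_in E S = {{y. reach_in E S x y} | x. x \<in> S}"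

definition cut_vertex :: "'a set \<Rightarrow> ('a \<Rightarrow> 'a \<Rightarrow> bool) \<Rightarrow> 'a \<Rightarrow> bool" where
  "cut_vertex V E v \<longleftrightarrow> v \<in> V \<and> card (components_in E (V - {v})) \<ge> 2"

definition fort :: "'a set \<Rightarrow> ('a \<Rightarrow> 'a \<Rightarrow> bool) \<Rightarrow> 'a set \<Rightarrow> bool" where
  "fort V E F \<longleftrightarrow> F \<noteq> {} \<and> F \<subseteq> V \<and>
     (\<forall>u\<in>V - F. card {w\<in>F. E u w} \<noteq> 1)"

definition minimal_fort :: "'a set \<Rightarrow> ('a \<Rightarrow> 'a \<Rightarrow> bool) \<Rightarrow> 'a set \<Rightarrow> bool" where
  "minimal_fort V E F \<longleftrightarrow> fort V E F \<and> (\<forall>F'. F' \<subset> F \<longrightarrow> \<not> fort V E F')"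

end

theory Submission
  imports Defs
begin

lemma reach_sym:
  assumes "\<forall>x y. E x y \<longrightarrow> E y x" "reach_in E S x y"
  shows "reach_in E S y x"
proof -
  let ?r = "\<lambda>a b. E a b \<and> a \<in> S \<and> b \<in> S"
  have "?r\<^sup>*\<^sup>* x y" using assms(2) unfolding reach_in_def by blast
  then have "?r\<^sup>*\<^sup>* y x"
  proof (induction rule: rtranclp_induct)
    case base then show ?case by simp
  next
    case (step b c)
    then have "?r c b" using assms(1) by blast
    then show ?case using step(3) by (rule converse_rtranclp_into_rtranclp)
  qed
  then show ?thesis using assms(2) unfolding reach_in_def by blast
qed

lemma reach_trans:
  assumes "reach_in E S x y" "reach_in E S y z"
  shows "reach_in E S x z"
  using assms unfolding reach_in_def by (meson rtranclp_trans)

lemma comp_closed: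
  assumes "C \<in> components_in E S" "y \<in> C" "z \<in> S" "E y z"
  shows "z \<in> C"
proof -
  obtain x where x: "x \<in> S" "C = {y. reach_in E S x y}"
    using assms(1) unfolding components_in_def by blast
  have "reach_in E S x y" using assms(2) x by blast
  moreover have "reach_in E S y z" using assms(2-4) `reach_in E S x y`
    unfolding reach_in_def by (simp add: r_into_rtranclp)
  ultimately have "reach_in E S x z" by (rule reach_trans)
  then show ?thesis using x by simp
qed

lemma comp_sub: "C \<in> components_in E S \<Longrightarrow> C \<subseteq> S"
  by (auto simp: components_in_def reach_in_def)

lemma comp_disj:
  assumes "\<forall>x y. E x y \<longrightarrow> E y x"
    "C1 \<in> components_in E S" "C2 \<in> components_in E S" "C1 \<noteq> C2"
  shows "C1 \<inter> C2 = {}"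
proof (rule ccontr)
  assume "C1 \<inter> C2 \<noteq> {}"
  then obtain z where z: "z \<in> C1" "z \<in> C2" by blast
  obtain x1 where x1: "x1 \<in> S" "C1 = {y. reach_in E S x1 y}"
    using assms(2) unfolding components_in_def by blast
  obtain x2 where x2: "x2 \<in> S" "C2 = {y. reach_in E S x2 y}"
    using assms(3) unfolding components_in_def by blast
  have r1: "reach_in E S x1 z" using z x1 by simp
  have r2: "reach_in E S z x2" using z x2 reach_sym[OF assms(1)] by simp
  have r: "reach_in E S x1 x2" using reach_trans[OF r1 r2] .
  have r': "reach_in E S x2 x1" using reach_sym[OF assms(1) r] .
  have "C1 = C2" unfolding x1(2) x2(2)
    using reach_trans[OF r] reach_trans[OF r'] by blast
  then show False using assms(4) by blast
qed

lemma sub_fort: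
  assumes sg: "simple_graph V E" and f: "fort V E F" and vF: "v \<notin> F"
    and UV: "U \<subseteq> V - {v}"
    and cl: "\<forall>x y. x \<in> U \<longrightarrow> y \<in> V - {v} \<longrightarrow> E x y \<longrightarrow> y \<in> U"
    and ne: "F \<inter> U \<noteq> {}"
    and cv: "card {w \<in> F \<inter> U. E v w} \<noteq> 1"
  shows "fort V E (F \<inter> U)"
  unfolding fort_def
proof (intro conjI ballI)
  show "F \<inter> U \<noteq> {}" by fact
  show "F \<inter> U \<subseteq> V" using f unfolding fort_def by blast
  fix u assume u: "u \<in> V - F \<inter> U"
  show "card {w \<in> F \<inter> U. E u w} \<noteq> 1"
  proof (cases "u = v")
    case True then show ?thesis using cv by simp
  next
    case False
    show ?thesis
    proof (cases "u \<in> U")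
      case True
      then have "u \<notin> F" using u by blast
      have "{w \<in> F \<inter> U. E u w} = {w \<in> F. E u w}"
      proof -
        have "w \<in> U" if "w \<in> F" "E u w" for w
        proof -
          have "w \<in> V" using that f unfolding fort_def by blast
          moreover have "w \<noteq> v" using that vF by blast
          ultimately show ?thesis using cl True that by blast
        qed
        then show ?thesis by blast
      qed
      then show ?thesis using f `u \<notin> F` u unfolding fort_def by auto
    next
      case uU: False
      have "{w \<in> F \<inter> U. E u w} = {}"
      proof -
        have False if "w \<in> F \<inter> U" "E u w" for w
        proof -
          have "E w u" using sg that unfolding simple_graph_def by blast
          then show False using cl that u False uU by blast
        qed
        then show ?thesis by blast
      qed
      then show ?thesis by (metis card.empty zero_neq_one)
    qed
  qed
qed

theorem mainTheorem3:
  fixes V :: "'a set" and E :: "'a \<Rightarrow> 'a \<Rightarrow> bool" and v :: 'a and F :: "'a set"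
  assumes "simple_graph V E"
    and "connected_graph V E"
    and "cut_vertex V E v"
    and "minimal_fort V E F"
    and "v \<notin> F"
  shows "card {C \<in> components_in E (V - {v}). C \<inter> F \<noteq> {}} \<le> 2"
proof (rule ccontr)
  let ?K = "components_in E (V - {v})"
  let ?M = "{C \<in> ?K. C \<inter> F \<noteq> {}}"
  assume "\<not> card ?M \<le> 2"
  then have "3 \<le> card ?M" by simp
  then obtain B where B: "B \<subseteq> ?M" "card B = 3" by (meson obtain_subset_with_card_n)
  then obtain C1 C2 C3 where B3: "B = {C1, C2, C3}" "C1 \<noteq> C2" "C2 \<noteq> C3" "C1 \<noteq> C3"
    using card_3_iff by metis
  have sym: "\<forall>x y. E x y \<longrightarrow> E y x" using assms(1) unfolding simple_graph_def by blast
  have finV: "finite V" using assms(1) unfolding simple_graph_def by blast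
  have fF: "fort V E F" and mF: "\<forall>F'. F' \<subset> F \<longrightarrow> \<not> fort V E F'"
    using assms(4) unfolding minimal_fort_def by auto
  have FV: "F \<subseteq> V" using fF unfolding fort_def by blast
  have inK: "C1 \<in> ?K" "C2 \<in> ?K" "C3 \<in> ?K" and ne: "C1 \<inter> F \<noteq> {}" "C2 \<inter> F \<noteq> {}" "C3 \<inter> F \<noteq> {}"
    using B B3 by auto
  have d12: "C1 \<inter> C2 = {}" and d13: "C1 \<inter> C3 = {}" and d23: "C2 \<inter> C3 = {}"
    using comp_disj[OF sym] inK B3 by auto
  have sub: "C1 \<subseteq> V - {v}" "C2 \<subseteq> V - {v}" using inK comp_sub by auto
  have cl1: "\<forall>x y. x \<in> C1 \<longrightarrow> y \<in> V - {v} \<longrightarrow> E x y \<longrightarrow> y \<in> C1"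
    using comp_closed[OF inK(1)] by blast
  have cl2: "\<forall>x y. x \<in> C2 \<longrightarrow> y \<in> V - {v} \<longrightarrow> E x y \<longrightarrow> y \<in> C2"
    using comp_closed[OF inK(2)] by blast
  have proper: "F \<inter> U \<subset> F" if "U \<inter> C3 = {}" for U
    using ne(3) that by blast
  show False
  proof (cases "card {w \<in> F \<inter> C1. E v w} = 1")
    case False
    have "fort V E (F \<inter> C1)"
      using sub_fort[OF assms(1) fF assms(5) sub(1) cl1 _ False] ne(1) by blast
    then show False using mF proper[of C1] d13 by blast
  next
    case c1: True
    show False
    proof (cases "card {w \<in> F \<inter> C2. E v w} = 1")
      case False
      have "fort V E (F \<inter> C2)"
        using sub_fort[OF assms(1) fF assms(5) sub(2) cl2 _ False] ne(2) by blast
      then show False using mF proper[of C2] d23 by blast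
    next
      case c2: True
      have eq: "{w \<in> F \<inter> (C1 \<union> C2). E v w} = {w \<in> F \<inter> C1. E v w} \<union> {w \<in> F \<inter> C2. E v w}"
        by blast
      have "card {w \<in> F \<inter> (C1 \<union> C2). E v w} = 2"
        unfolding eq
        by (subst card_Un_disjoint) (use c1 c2 d12 finV FV in \<open>auto intro: finite_subset\<close>)
      then have cv: "card {w \<in> F \<inter> (C1 \<union> C2). E v w} \<noteq> 1" by simp
      have "fort V E (F \<inter> (C1 \<union> C2))"
        apply (rule sub_fort[OF assms(1) fF assms(5) _ _ _ cv])
        using sub cl1 cl2 ne by blast+
      moreover have "F \<inter> (C1 \<union> C2) \<subset> F" using proper[of "C1 \<union> C2"] d13 d23 by blast
      ultimately show False using mF by blast
    qed
  qed
qed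

end
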